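(* Let $A$ be a bounded operator on a Hilbert space $H$, let $X$ be a bounded subset of $\mathbb{C}$ such that $X^{-}$ contains the spectrum of $A$, and let $\kappa>0$. The following are equivalent: (i) $\kappa$ is a spectral constant for $A$ on $X$; (ii) $\kappa$ is a spectral constant for $A$ on every smoothly bounded open neighbourhood $\Omega$ of the spectrum of $A$ for which $\Omega^{-}$ contains $X$. If $X$ is convex, then (i) and (ii) are also equivalent to: (iii) $\kappa$ is a spectral constant for $A$ on every convex smoothly bounded open neighbourhood $\Omega$ of the spectrum of $A$ for which $\Omega^{-}$ contains $X$.
   Context: For a bounded set $Y\subseteq\mathbb{C}$ whose closure contains the spectrum of $A$, a positive number $\kappa$ is a spectral constant for $A$ on $Y$ if $\|f(A)\|\le\kappa\sup_{z\in Y}|f(z)|$ for every rational function $f\colon Y^{-}\to\mathbb{C}$ with poles off $Y^{-}$. An open subset $\Omega$ of $\mathbb{C}$ is smoothly bounded if it is bounded and $\partial\Omega$ is an embedded smooth submanifold of $\mathbb{C}$. *)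

theory Defs
  imports "HOL-Analysis.Analysis" "HOL-Computational_Algebra.Polynomial"
begin

class complex_inner = real_normed_vector +
  fixes scaleC :: "complex \<Rightarrow> 'a \<Rightarrow> 'a" (infixr \<open>*\<^sub>C\<close> 75)
  fixes cinner :: "'a \<Rightarrow> 'a \<Rightarrow> complex"
  assumes scaleC_add_right: "a *\<^sub>C (x + y) = a *\<^sub>C x + a *\<^sub>C y"
    and scaleC_add_left: "(a + b) *\<^sub>C x = a *\<^sub>C x + b *\<^sub>C x"
    and scaleC_scaleC: "a *\<^sub>C (b *\<^sub>C x) = (a * b) *\<^sub>C x"
    and scaleC_one: "1 *\<^sub>C x = x"
    and scaleR_scaleC: "scaleR r x = complex_of_real r *\<^sub>C x"
    and cinner_add_left: "cinner (x + y) z = cinner x z + cinner y z"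
    and cinner_scaleC_left: "cinner (a *\<^sub>C x) y = cnj a * cinner x y"
    and cinner_commute: "cinner x y = cnj (cinner y x)"
    and cinner_norm: "cinner x x = complex_of_real ((norm x)\<^sup>2)"

class chilbert_space = complex_inner + complete_space

definition bounded_op :: "('a::complex_inner \<Rightarrow> 'a) \<Rightarrow> bool" where
  "bounded_op A \<longleftrightarrow> bounded_linear A \<and> (\<forall>c x. A (c *\<^sub>C x) = c *\<^sub>C A x)"

definition op_spectrum :: "('a::complex_inner \<Rightarrow> 'a) \<Rightarrow> complex set" where
  "op_spectrum A = {l. \<not> (\<exists>B. bounded_op B \<and> (\<forall>x. B (A x - l *\<^sub>C x) = x)
                                    \<and> (\<forall>x. A (B x) - l *\<^sub>C B x = x))}"

definition op_poly :: "complex poly \<Rightarrow> ('a::complex_inner \<Rightarrow> 'a) \<Rightarrow> 'a \<Rightarrow> 'a" where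
  "op_poly p A = (\<lambda>x. \<Sum>i\<le>degree p. coeff p i *\<^sub>C ((A ^^ i) x))"

definition op_rat :: "complex poly \<Rightarrow> complex poly \<Rightarrow> ('a::complex_inner \<Rightarrow> 'a) \<Rightarrow> 'a \<Rightarrow> 'a" where
  "op_rat p q A = op_poly p A \<circ> inv (op_poly q A)"

text \<open>Spectral constant: rational functions with poles off the closure of \<open>Y\<close>
  are represented as quotients \<open>p/q\<close> with \<open>q \<noteq> 0\<close> having no zero on \<open>closure Y\<close>.\<close>
definition spectral_constant :: "('a::complex_inner \<Rightarrow> 'a) \<Rightarrow> complex set \<Rightarrow> real \<Rightarrow> bool" where
  "spectral_constant A Y \<kappa> \<longleftrightarrow> \<kappa> > 0 \<and>
     (\<forall>p q. q \<noteq> 0 \<and> (\<forall>z\<in>closure Y. poly q z \<noteq> 0) \<longrightarrow>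
        onorm (op_rat p q A) \<le> \<kappa> * (SUP z\<in>Y. norm (poly p z / poly q z)))"

text \<open>Iterated directional (real) derivatives of a map \<open>\<complex> \<rightarrow> \<complex>\<close> viewed as \<open>\<real>\<^sup>2 \<rightarrow> \<real>\<^sup>2\<close>.\<close>
fun iter_pd :: "complex list \<Rightarrow> (complex \<Rightarrow> complex) \<Rightarrow> complex \<Rightarrow> complex" where
  "iter_pd [] f = f"
| "iter_pd (v # vs) f = (\<lambda>z. vector_derivative (\<lambda>t::real. iter_pd vs f (z + complex_of_real t * v)) (at 0))"

definition smooth_on :: "complex set \<Rightarrow> (complex \<Rightarrow> complex) \<Rightarrow> bool" where
  "smooth_on U f \<longleftrightarrow> open U \<and>
     (\<forall>vs. set vs \<subseteq> {1, \<i>} \<longrightarrow> continuous_on U (iter_pd vs f) \<and>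
        (\<forall>v\<in>{1, \<i>}. \<forall>z\<in>U. (\<lambda>t::real. iter_pd vs f (z + complex_of_real t * v)) differentiable (at 0)))"

text \<open>Embedded smooth submanifold of \<open>\<complex> = \<real>\<^sup>2\<close> (of any dimension): locally straightened by a
  diffeomorphism onto a (real) linear subspace.\<close>
definition embedded_smooth_submanifold :: "complex set \<Rightarrow> bool" where
  "embedded_smooth_submanifold M \<longleftrightarrow>
     (\<forall>p\<in>M. \<exists>U \<phi> L. open U \<and> p \<in> U \<and> inj_on \<phi> U \<and> open (\<phi> ` U) \<and>
        smooth_on U \<phi> \<and> smooth_on (\<phi> ` U) (the_inv_into U \<phi>) \<and>
        subspace L \<and> \<phi> ` (U \<inter> M) = \<phi> ` U \<inter> L)"

definition smoothly_bounded :: "complex set \<Rightarrow> bool" where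
  "smoothly_bounded \<Omega> \<longleftrightarrow> open \<Omega> \<and> bounded \<Omega> \<and> embedded_smooth_submanifold (frontier \<Omega>)"

end

theory Submission
  imports Defs "HOL-Complex_Analysis.Complex_Analysis" "HOL-Computational_Algebra.Fundamental_Theorem_Algebra"
begin

lemma iter_pd_hol_deriv:
  assumes "g holomorphic_on U" "open U" "z \<in> U"
  shows "((\<lambda>t::real. c * g (z + complex_of_real t * v)) has_vector_derivative (c * deriv g z * v)) (at 0)"
proof -
  have "(g has_field_derivative deriv g z) (at z)"
    using assms holomorphic_derivI by blast
  then have "(g has_field_derivative deriv g z) (at (z + complex_of_real 0 * v))" by simp
  moreover have "((\<lambda>t::real. z + complex_of_real t * v) has_vector_derivative v) (at 0)"
    by (auto intro!: derivative_eq_intros)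
  ultimately have "((\<lambda>t::real. g (z + complex_of_real t * v)) has_vector_derivative (v * deriv g z)) (at 0)"
    using field_vector_diff_chain_at[of "\<lambda>t::real. z + complex_of_real t * v" v 0 g] 
    by (simp add: o_def)
  then have "((\<lambda>t::real. c * g (z + complex_of_real t * v)) has_vector_derivative c * (v * deriv g z)) (at 0)"
    by (rule has_vector_derivative_mult_right)
  then show ?thesis by (simp add: mult_ac)
qed

lemma iter_pd_hol:
  assumes "f holomorphic_on U" "open U"
  shows "\<forall>z\<in>U. iter_pd vs f z = prod_list vs * (deriv ^^ length vs) f z"
proof (induction vs)
  case Nil
  then show ?case by simp
next
  case (Cons v vs)
  show ?case
  proof
    fix z assume z: "z \<in> U"
    let ?c = "prod_list vs" and ?g = "(deriv ^^ length vs) f"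
    have hg: "?g holomorphic_on U" using assms holomorphic_higher_deriv by blast
    have D: "((\<lambda>t::real. ?c * ?g (z + complex_of_real t * v)) has_vector_derivative (?c * deriv ?g z * v)) (at 0)"
      by (rule iter_pd_hol_deriv[OF hg assms(2) z])
    have op: "open {t::real. z + complex_of_real t * v \<in> U}"
    proof -
      have "{t::real. z + complex_of_real t * v \<in> U} = (\<lambda>t::real. z + complex_of_real t * v) -` U" by auto
      moreover have "continuous_on UNIV (\<lambda>t::real. z + complex_of_real t * v)"
        by (intro continuous_intros)
      ultimately show ?thesis using open_vimage assms(2) by metis
    qed
    have "((\<lambda>t::real. iter_pd vs f (z + complex_of_real t * v)) has_vector_derivative (?c * deriv ?g z * v)) (at 0)"
      by (rule has_vector_derivative_transform_within_open[OF D op]) (use z Cons in auto)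
    then have "iter_pd (v # vs) f z = ?c * deriv ?g z * v"
      by (simp add: vector_derivative_at)
    then show "iter_pd (v # vs) f z = prod_list (v # vs) * (deriv ^^ length (v # vs)) f z"
      by (simp add: mult_ac)
  qed
qed

lemma iter_pd_hol_diff:
  assumes "f holomorphic_on U" "open U" "z \<in> U"
  shows "(\<lambda>t::real. iter_pd vs f (z + complex_of_real t * v)) differentiable (at 0)"
proof -
  let ?c = "prod_list vs" and ?g = "(deriv ^^ length vs) f"
  have hg: "?g holomorphic_on U" using assms holomorphic_higher_deriv by blast
  have D: "((\<lambda>t::real. ?c * ?g (z + complex_of_real t * v)) has_vector_derivative (?c * deriv ?g z * v)) (at 0)"
    by (rule iter_pd_hol_deriv[OF hg assms(2,3)])
  have op: "open {t::real. z + complex_of_real t * v \<in> U}"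
  proof -
    have "{t::real. z + complex_of_real t * v \<in> U} = (\<lambda>t::real. z + complex_of_real t * v) -` U" by auto
    moreover have "continuous_on UNIV (\<lambda>t::real. z + complex_of_real t * v)"
      by (intro continuous_intros)
    ultimately show ?thesis using open_vimage assms(2) by metis
  qed
  have "((\<lambda>t::real. iter_pd vs f (z + complex_of_real t * v)) has_vector_derivative (?c * deriv ?g z * v)) (at 0)"
    by (rule has_vector_derivative_transform_within_open[OF D op]) (use assms iter_pd_hol[OF assms(1,2)] in auto)
  then show ?thesis using differentiableI_vector by blast
qed

lemma holomorphic_smooth_on:
  assumes "f holomorphic_on U" "open U"
  shows "smooth_on U f"
  unfolding smooth_on_def
proof (intro conjI allI impI ballI)
  show "open U" by fact
  fix vs :: "complex list"
  have "continuous_on U (\<lambda>z. prod_list vs * (deriv ^^ length vs) f z)"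
    using assms holomorphic_higher_deriv holomorphic_on_imp_continuous_on
    by (intro continuous_intros) blast
  then show "continuous_on U (iter_pd vs f)"
    using iter_pd_hol[OF assms] continuous_on_cong by (smt (verit))
  fix v z assume "z \<in> U"
  then show "(\<lambda>t::real. iter_pd vs f (z + complex_of_real t * v)) differentiable (at 0)"
    using iter_pd_hol_diff[OF assms] by blast
qed

lemma chart_lemma:
  assumes U: "open U" "p \<in> U" and hk: "k holomorphic_on U" and ik: "inj_on k U" and kp: "k p \<noteq> 0"
    and kb: "\<forall>z\<in>U. k z / k p \<in> ball 1 1"
    and M: "\<forall>z\<in>U. (z \<in> M \<longleftrightarrow> cmod (k z) = cmod (k p))"
  shows "\<exists>U \<phi> L. open U \<and> p \<in> U \<and> inj_on \<phi> U \<and> open (\<phi> ` U) \<and>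
        smooth_on U \<phi> \<and> smooth_on (\<phi> ` U) (the_inv_into U \<phi>) \<and>
        subspace L \<and> \<phi> ` (U \<inter> M) = \<phi> ` U \<inter> L"
proof -
  define \<phi> where "\<phi> = (\<lambda>z. Ln (k z / k p))"
  define L where "L = {w::complex. Re w = 0}"
  have b: "ball (1::complex) 1 \<inter> \<real>\<^sub>\<le>\<^sub>0 = {}"
  proof -
    have False if "x \<in> ball (1::complex) 1" "x \<in> \<real>\<^sub>\<le>\<^sub>0" for x
    proof -
    from that     obtain r where r: "x = of_real r" "r \<le> 0" by (auto elim!: nonpos_Reals_cases)
    with \<open>x \<in> ball 1 1\<close> have "cmod (1 - of_real r) < 1" by (simp add: dist_norm)
    moreover have "1 - complex_of_real r = complex_of_real (1 - r)" by simp
    ultimately have "\<bar>1 - r\<bar> < 1" by (metis norm_of_real)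
    then show False using r by simp
    qed
    then show ?thesis by blast
  qed
  have hphi: "\<phi> holomorphic_on U"
    unfolding \<phi>_def
  proof (rule holomorphic_on_compose_gen[where f="\<lambda>z. k z / k p" and g=Ln and t="ball 1 1", unfolded o_def])
    show "(\<lambda>z. k z / k p) holomorphic_on U" using hk kp by (intro holomorphic_intros)
    show "Ln holomorphic_on ball 1 1" using b by (intro holomorphic_on_Ln)
    show "(\<lambda>z. k z / k p) ` U \<subseteq> ball 1 1" using kb by auto
  qed
  have nz: "k z \<noteq> 0" if "z \<in> U" for z
    using kb that by (metis centre_in_ball div_0 mem_ball zero_less_one dist_commute dist_0_norm norm_one less_irrefl)
  have iphi: "inj_on \<phi> U"
  proof (rule inj_onI)
    fix x y assume xy: "x \<in> U" "y \<in> U" "\<phi> x = \<phi> y"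
    then have "exp (\<phi> x) = exp (\<phi> y)" by simp
    then have "k x / k p = k y / k p" unfolding \<phi>_def using nz xy kp by simp
    then have "k x = k y" using kp by simp
    then show "x = y" using ik xy by (meson inj_onD)
  qed
  have oimg: "open (\<phi> ` U)" by (rule open_mapping_thm3[OF hphi U(1) iphi])
  obtain g where g: "g holomorphic_on (\<phi> ` U)" "\<And>z. z \<in> U \<Longrightarrow> g (\<phi> z) = z"
    using holomorphic_has_inverse[OF hphi U(1) iphi] by metis
  have "the_inv_into U \<phi> holomorphic_on (\<phi> ` U)"
    using g(1) by (rule holomorphic_transform) (use g(2) iphi the_inv_into_f_f in force)
  then have s2: "smooth_on (\<phi> ` U) (the_inv_into U \<phi>)"
    using holomorphic_smooth_on oimg by blast
  have s1: "smooth_on U \<phi>" using holomorphic_smooth_on hphi U by blast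
  have sub: "subspace L" unfolding subspace_def L_def by auto
  have eq: "z \<in> M \<longleftrightarrow> \<phi> z \<in> L" if "z \<in> U" for z
  proof -
    have "\<phi> z \<in> L \<longleftrightarrow> ln (cmod (k z / k p)) = 0"
      unfolding \<phi>_def L_def using nz[OF that] kp by (simp add: Re_Ln)
    also have "\<dots> \<longleftrightarrow> cmod (k z / k p) = 1"
      using nz[OF that] kp by (simp add: ln_eq_zero_iff)
    also have "\<dots> \<longleftrightarrow> cmod (k z) = cmod (k p)"
      using kp by (auto simp add: norm_divide field_simps)
    finally show ?thesis using M that by blast
  qed
  have "\<phi> ` (U \<inter> M) = \<phi> ` U \<inter> L" using eq by auto
  then show ?thesis using U iphi oimg s1 s2 sub by blast
qed

lemma study_step:
  fixes f g :: "complex \<Rightarrow> complex"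
  assumes cV: "convex V" and oV: "open V"
    and hf: "f holomorphic_on V" and hg: "g holomorphic_on ball 0 1"
    and fV: "\<forall>z\<in>V. f z \<in> ball 0 1 \<and> g (f z) = z"
    and gD: "\<forall>z\<in>ball 0 1. g z \<in> V \<and> f (g z) = z"
    and a: "a \<in> V" and b: "b \<in> V" and le: "cmod (f a) \<le> cmod (f b)"
    and u: "0 \<le> u" "u \<le> 1"
  shows "(1 - u) *\<^sub>R a + u *\<^sub>R b \<in> V \<and> cmod (f ((1 - u) *\<^sub>R a + u *\<^sub>R b)) \<le> cmod (f b)"
proof -
  have inV: "(1 - u) *\<^sub>R a + u *\<^sub>R b \<in> V" using cV a b u by (simp add: convex_alt)
  show ?thesis
  proof (cases "f b = 0")
    case True
    then have "f a = 0" using le by simp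
    then have "a = b" using True fV a b by metis
    then show ?thesis using inV by (simp add: scaleR_left_diff_distrib)
  next
    case False
    define c where "c = f a / f b"
    have c1: "cmod c \<le> 1" using le False by (simp add: c_def norm_divide divide_le_eq_1)
    define F where "F = (\<lambda>z. f ((1 - u) *\<^sub>R g (c * z) + u *\<^sub>R g z))"
    have mapsto: "c * z \<in> ball 0 1" if "z \<in> ball 0 1" for z
    proof -
      have "cmod (c * z) \<le> cmod z" using c1 by (simp add: norm_mult mult_left_le_one_le)
      then show ?thesis using that by simp
    qed
    have inV2: "(1 - u) *\<^sub>R g (c * z) + u *\<^sub>R g z \<in> V" if "z \<in> ball 0 1" for z
      using cV gD mapsto[OF that] that u by (simp add: convex_alt)
    have hF: "F holomorphic_on ball 0 1"
      unfolding F_def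
    proof (rule holomorphic_on_compose_gen[where g=f and t=V, unfolded o_def])
      have "(\<lambda>z. g (c * z)) holomorphic_on ball 0 1"
      proof -
        have "(*) c ` ball 0 1 \<subseteq> ball 0 1" using mapsto by auto
        then show ?thesis
          using holomorphic_on_compose_gen[of "\<lambda>z. c * z" "ball 0 1" g "ball 0 1"] hg
          by (auto simp: o_def intro: holomorphic_intros)
      qed
      then show "(\<lambda>z. (1 - u) *\<^sub>R g (c * z) + u *\<^sub>R g z) holomorphic_on ball 0 1"
        unfolding scaleR_conv_of_real using hg by (intro holomorphic_intros)
      show "f holomorphic_on V" by fact
      show "(\<lambda>z. (1 - u) *\<^sub>R g (c * z) + u *\<^sub>R g z) ` ball 0 1 \<subseteq> V" using inV2 by auto
    qed
    have F0: "F 0 = 0"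
    proof -
      have "(1 - u) *\<^sub>R g 0 + u *\<^sub>R g 0 = g 0" by (simp add: scaleR_left_diff_distrib)
      then show ?thesis unfolding F_def using gD by simp
    qed
    have Fb: "cmod (F z) < 1" if "cmod z < 1" for z
      using fV inV2[of z] that unfolding F_def by simp
    have fb1: "cmod (f b) < 1" using fV b by simp
    have "cmod (F (f b)) \<le> cmod (f b)"
      using Schwarz_Lemma(1)[OF hF F0 Fb fb1] by blast
    moreover have "F (f b) = f ((1 - u) *\<^sub>R a + u *\<^sub>R b)"
      unfolding F_def c_def using False fV a b by simp
    ultimately show ?thesis using inV by simp
  qed
qed

lemma convex_smooth_approx:
  assumes K: "compact K" "K \<noteq> {}" and V: "convex V" "open V" "bounded V" and KV: "K \<subseteq> V"
  shows "\<exists>\<Omega>. convex \<Omega> \<and> smoothly_bounded \<Omega> \<and> K \<subseteq> \<Omega> \<and> closure \<Omega> \<subseteq> V"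
proof -
  have "V \<noteq> {}" using K KV by blast
  moreover have "V \<noteq> UNIV" using V(3) not_bounded_UNIV by blast
  moreover have "open V \<and> simply_connected V" using V convex_imp_simply_connected by blast
  ultimately obtain f g where hf: "f holomorphic_on V" and hg: "g holomorphic_on ball 0 1"
    and fV: "\<forall>z\<in>V. f z \<in> ball 0 1 \<and> g (f z) = z"
    and gD: "\<forall>z\<in>ball 0 1. g z \<in> V \<and> f (g z) = z"
    using Riemann_mapping_theorem[of V] by blast
  have cf: "continuous_on V f" using hf holomorphic_on_imp_continuous_on by blast
  have cg: "continuous_on (ball 0 1) g" using hg holomorphic_on_imp_continuous_on by blast
  have "compact ((\<lambda>z. cmod (f z)) ` K)"
    using K(1) by (intro compact_continuous_image continuous_on_norm continuous_on_subset[OF cf KV])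
  then obtain m where m: "m \<in> (\<lambda>z. cmod (f z)) ` K" "\<forall>y\<in>(\<lambda>z. cmod (f z)) ` K. y \<le> m"
    using compact_attains_sup K(2) by (metis image_is_empty)
  have m1: "m < 1" using m(1) fV KV by auto
  have m0: "0 \<le> m" using m(1) by auto
  define r where "r = (m + 1) / 2"
  have r: "0 < r" "r < 1" "m < r" using m0 m1 by (auto simp: r_def)
  define \<Omega> where "\<Omega> = {z\<in>V. cmod (f z) < r}"
  have \<Omega>img: "\<Omega> = g ` ball 0 r"
  proof
    show "\<Omega> \<subseteq> g ` ball 0 r"
    proof
      fix z assume "z \<in> \<Omega>"
      then have "z \<in> V" "cmod (f z) < r" by (auto simp: \<Omega>_def)
      then show "z \<in> g ` ball 0 r" using fV by (metis dist_0_norm imageI mem_ball dist_commute)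
    qed
    show "g ` ball 0 r \<subseteq> \<Omega>"
      using gD r unfolding \<Omega>_def by auto
  qed
  have oO: "open \<Omega>"
  proof -
    have "\<Omega> = V \<inter> (\<lambda>z. cmod (f z)) -` {..<r}" by (auto simp: \<Omega>_def)
    then show ?thesis using continuous_open_preimage[OF continuous_on_norm[OF cf] V(2), of "{..<r}"] by simp
  qed
  have KO: "K \<subseteq> \<Omega>" using KV m(2) r unfolding \<Omega>_def by fastforce
  have cgr: "continuous_on (cball 0 r) g"
    by (rule continuous_on_subset[OF cg]) (use r in \<open>auto simp: subset_iff\<close>)
  have gcV: "g ` cball 0 r \<subseteq> V" using gD r by auto
  have clO: "closure \<Omega> \<subseteq> g ` cball 0 r"
  proof -
    have "compact (g ` cball 0 r)" using cgr by (intro compact_continuous_image) auto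
    then have "closed (g ` cball 0 r)" by (rule compact_imp_closed)
    moreover have "\<Omega> \<subseteq> g ` cball 0 r" using \<Omega>img by auto
    ultimately show ?thesis by (rule closure_minimal[rotated])
  qed
  have clV: "closure \<Omega> \<subseteq> V" using clO gcV by blast
  have fr: "frontier \<Omega> = {z\<in>V. cmod (f z) = r}"
  proof
    show "frontier \<Omega> \<subseteq> {z\<in>V. cmod (f z) = r}"
    proof
      fix z assume z: "z \<in> frontier \<Omega>"
      then have zc: "z \<in> closure \<Omega>" and zn: "z \<notin> \<Omega>" using oO by (auto simp: frontier_def interior_open)
      then obtain w where w: "w \<in> cball 0 r" "z = g w" using clO by blast
      have "w \<in> ball 0 1" using w r by auto
      then have "z \<in> V" "f z = w" using gD w by auto
      then show "z \<in> {z\<in>V. cmod (f z) = r}" using zn w by (auto simp: \<Omega>_def)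
    qed
    show "{z\<in>V. cmod (f z) = r} \<subseteq> frontier \<Omega>"
    proof
      fix z assume z: "z \<in> {z\<in>V. cmod (f z) = r}"
      then have zn: "z \<notin> \<Omega>" by (auto simp: \<Omega>_def)
      have "g ` closure (ball 0 r) \<subseteq> closure (g ` ball 0 r)"
        using image_closure_subset[of "ball 0 r" g "closure (g ` ball 0 r)"] cgr r closure_subset[of "g ` ball 0 r"]
        by (simp add: closure_ball)
      moreover have "f z \<in> closure (ball 0 r)" using z r by auto
      moreover have "g (f z) = z" using fV z by auto
      ultimately have "z \<in> closure \<Omega>" using \<Omega>img by (metis image_subset_iff)
      then show "z \<in> frontier \<Omega>" using zn oO by (auto simp: frontier_def interior_open)
    qed
  qed
  have inj: "inj_on f V" using fV by (metis inj_on_inverseI)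
  have man: "embedded_smooth_submanifold (frontier \<Omega>)"
    unfolding embedded_smooth_submanifold_def
  proof
    fix p assume p: "p \<in> frontier \<Omega>"
    then have pV: "p \<in> V" and fp: "cmod (f p) = r" using fr by auto
    define U where "U = V \<inter> f -` ball (f p) (r/2)"
    have oU: "open U" unfolding U_def by (rule continuous_open_preimage[OF cf V(2)]) auto
    have pU: "p \<in> U" unfolding U_def using pV r by auto
    have fp0: "f p \<noteq> 0" using fp r by auto
    show "\<exists>U \<phi> L. open U \<and> p \<in> U \<and> inj_on \<phi> U \<and> open (\<phi> ` U) \<and>
        smooth_on U \<phi> \<and> smooth_on (\<phi> ` U) (the_inv_into U \<phi>) \<and>
        subspace L \<and> \<phi> ` (U \<inter> frontier \<Omega>) = \<phi> ` U \<inter> L"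
    proof (rule chart_lemma[where k=f, OF oU pU _ _ fp0])
      show "f holomorphic_on U" using hf by (rule holomorphic_on_subset) (auto simp: U_def)
      show "inj_on f U" using inj by (rule inj_on_subset) (auto simp: U_def)
      show "\<forall>z\<in>U. f z / f p \<in> ball 1 1"
      proof
        fix z assume "z \<in> U"
        then have "cmod (f z - f p) < r/2" by (auto simp: U_def dist_norm norm_minus_commute)
        then have "cmod (f z / f p - 1) < 1/2" using fp fp0 r
          by (simp add: norm_divide divide_simps diff_divide_distrib[symmetric])
        then show "f z / f p \<in> ball 1 1" by (simp add: dist_norm norm_minus_commute)
      qed
      show "\<forall>z\<in>U. (z \<in> frontier \<Omega>) = (cmod (f z) = cmod (f p))"
        using fr fp by (auto simp: U_def)
    qed
  qed
  have sb: "smoothly_bounded \<Omega>"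
    unfolding smoothly_bounded_def using oO man bounded_subset[OF V(3)] by (auto simp: \<Omega>_def)
  have cO: "convex \<Omega>"
    unfolding convex_alt
  proof (intro ballI allI impI)
    fix a b and u :: real assume a: "a \<in> \<Omega>" and b: "b \<in> \<Omega>" and u: "0 \<le> u \<and> u \<le> 1"
    show "(1 - u) *\<^sub>R a + u *\<^sub>R b \<in> \<Omega>"
    proof (cases "cmod (f a) \<le> cmod (f b)")
      case True
      have "a \<in> V" "b \<in> V" "cmod (f b) < r" using a b by (auto simp: \<Omega>_def)
      then show ?thesis using study_step[OF V(1,2) hf hg fV gD _ _ True, of u] u
        unfolding \<Omega>_def by fastforce
    next
      case False
      then have "cmod (f b) \<le> cmod (f a)" by simp
      moreover have "a \<in> V" "b \<in> V" "cmod (f a) < r" using a b by (auto simp: \<Omega>_def)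
      ultimately have "(1 - (1 - u)) *\<^sub>R b + (1 - u) *\<^sub>R a \<in> V \<and> cmod (f ((1 - (1 - u)) *\<^sub>R b + (1 - u) *\<^sub>R a)) < r"
        using study_step[OF V(1,2) hf hg fV gD, of b a "1 - u"] u by fastforce
      then show ?thesis by (auto simp: \<Omega>_def add.commute)
    qed
  qed
  show ?thesis using cO sb KO clV by blast
qed

lemma rat_cont: "\<forall>z\<in>S. poly q z \<noteq> 0 \<Longrightarrow> continuous_on S (\<lambda>z. cmod (poly p z / poly q z))"
  by (intro continuous_intros) auto

lemma rat_bdd:
  assumes "bounded \<Omega>" "\<forall>z\<in>closure \<Omega>. poly q z \<noteq> 0"
  shows "bdd_above ((\<lambda>z. cmod (poly p z / poly q z)) ` closure \<Omega>)"
proof -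
  have "compact (closure \<Omega>)" using assms(1) compact_closure by blast
  then have "compact ((\<lambda>z. cmod (poly p z / poly q z)) ` closure \<Omega>)"
    using rat_cont[OF assms(2)] compact_continuous_image by blast
  then show ?thesis by (simp add: bounded_imp_bdd_above compact_imp_bounded)
qed

lemma rat_bdd':
  assumes "bounded \<Omega>" "\<forall>z\<in>closure \<Omega>. poly q z \<noteq> 0"
  shows "bdd_above ((\<lambda>z. cmod (poly p z / poly q z)) ` \<Omega>)"
  using rat_bdd[OF assms] closure_subset by (meson bdd_above_mono image_mono)

lemma le_on_closure:
  assumes "bounded \<Omega>" "\<forall>z\<in>closure \<Omega>. poly q z \<noteq> 0" "\<forall>z\<in>\<Omega>. cmod (poly p z / poly q z) \<le> B"
    and "z \<in> closure \<Omega>"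
  shows "cmod (poly p z / poly q z) \<le> B"
proof -
  have "(\<lambda>z. cmod (poly p z / poly q z)) ` closure \<Omega> \<subseteq> {..B}"
    by (rule image_closure_subset[OF rat_cont[OF assms(2)]]) (use assms(3) in auto)
  then show ?thesis using assms(4) by auto
qed

lemma sup_closure_le:
  assumes "bounded \<Omega>" "X \<subseteq> closure \<Omega>" "X \<noteq> {}" "\<forall>z\<in>closure \<Omega>. poly q z \<noteq> 0"
  shows "(SUP z\<in>X. cmod (poly p z / poly q z)) \<le> (SUP z\<in>\<Omega>. cmod (poly p z / poly q z))"
proof -
  have ne: "\<Omega> \<noteq> {}" using assms(2,3) by auto
  have "cmod (poly p z / poly q z) \<le> (SUP z\<in>\<Omega>. cmod (poly p z / poly q z))" if "z \<in> X" for z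
  proof (rule le_on_closure[OF assms(1,4) _ ])
    show "\<forall>z\<in>\<Omega>. cmod (poly p z / poly q z) \<le> (SUP z\<in>\<Omega>. cmod (poly p z / poly q z))"
      using rat_bdd'[OF assms(1,4)] by (auto intro: cSUP_upper)
    show "z \<in> closure \<Omega>" using that assms(2) by auto
  qed
  then show ?thesis using assms(3) by (intro cSUP_least) auto
qed

lemma sup_nonneg:
  assumes "bounded \<Omega>" "\<Omega> \<noteq> {}" "\<forall>z\<in>closure \<Omega>. poly q z \<noteq> 0"
  shows "0 \<le> (SUP z\<in>\<Omega>. cmod (poly p z / poly q z))"
proof -
  obtain z where "z \<in> \<Omega>" using assms(2) by blast
  then have "cmod (poly p z / poly q z) \<le> (SUP z\<in>\<Omega>. cmod (poly p z / poly q z))"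
    using rat_bdd'[OF assms(1,3)] by (auto intro: cSUP_upper)
  then show ?thesis by (meson norm_ge_zero order_trans)
qed

lemma op_poly_const: "op_poly [:c:] A = (\<lambda>x. c *\<^sub>C x)"
  unfolding op_poly_def by simp

lemma op_poly_one: "op_poly 1 A = (\<lambda>x. x)"
  unfolding op_poly_def by (simp add: scaleC_one)

lemma op_rat_const: "op_rat [:c:] 1 A = (\<lambda>x. c *\<^sub>C x)"
  unfolding op_rat_def op_poly_const op_poly_one by (simp add: inv_identity o_def)

lemma onorm_trivial:
  assumes "\<forall>x::'a::real_normed_vector. x = 0"
  shows "onorm (F :: 'a \<Rightarrow> 'a) = 0"
proof -
  have eq: "(\<lambda>x. norm (F x) / norm x) = (\<lambda>x. 0)" using assms by (metis div_by_0 norm_zero)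
  have "onorm F = (SUP x::'a. (0::real))" unfolding onorm_def eq ..
  then show ?thesis by simp
qed

lemma trivial_if_empty:
  fixes A :: "'a::complex_inner \<Rightarrow> 'a"
  assumes sc: "spectral_constant A {} \<kappa>"
  shows "\<forall>x::'a. x = 0"
proof (rule ccontr)
  assume "\<not> (\<forall>x::'a. x = 0)"
  then obtain x0 :: 'a where x0: "x0 \<noteq> 0" by blast
  define s where "s = (SUP z\<in>{}. cmod (poly [:1:] z / poly 1 z))"
  define t where "t = \<bar>\<kappa> * s\<bar> + 1"
  have "onorm (op_rat [:complex_of_real t:] 1 A) \<le> \<kappa> * (SUP z\<in>{}. cmod (poly [:complex_of_real t:] z / poly 1 z))"
    using sc unfolding spectral_constant_def by auto
  then have le: "onorm (\<lambda>x::'a. t *\<^sub>R x) \<le> \<kappa> * s"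
    unfolding op_rat_const s_def by (simp add: scaleR_scaleC)
  have bl: "bounded_linear (\<lambda>x::'a. t *\<^sub>R x)" by (rule bounded_linear_scaleR_right)
  have "norm (t *\<^sub>R x0) \<le> onorm (\<lambda>x::'a. t *\<^sub>R x) * norm x0" by (rule onorm[OF bl])
  then have "\<bar>t\<bar> * norm x0 \<le> onorm (\<lambda>x::'a. t *\<^sub>R x) * norm x0" by simp
  then have "\<bar>t\<bar> \<le> onorm (\<lambda>x::'a. t *\<^sub>R x)" using x0 by simp
  with le show False unfolding t_def by linarith
qed

lemma i_to_ii:
  fixes A :: "'a::complex_inner \<Rightarrow> 'a"
  assumes sc: "spectral_constant A X \<kappa>" and bO: "bounded \<Omega>" and XO: "X \<subseteq> closure \<Omega>"
  shows "spectral_constant A \<Omega> \<kappa>"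
  unfolding spectral_constant_def
proof (intro conjI allI impI)
  show "\<kappa> > 0" using sc by (simp add: spectral_constant_def)
  fix p q assume pq: "q \<noteq> 0 \<and> (\<forall>z\<in>closure \<Omega>. poly q z \<noteq> 0)"
  show "onorm (op_rat p q A) \<le> \<kappa> * (SUP z\<in>\<Omega>. cmod (poly p z / poly q z))"
  proof (cases "X = {}")
    case True
    then have triv: "\<forall>x::'a. x = 0" using sc trivial_if_empty by blast
    then have on0: "onorm (op_rat p q A) = 0" by (rule onorm_trivial)
    show ?thesis
    proof (cases "\<Omega> = {}")
      case True
      have "onorm (op_rat 1 1 A) \<le> \<kappa> * (SUP z\<in>{}. cmod (poly 1 z / poly 1 z))"
        using sc \<open>X = {}\<close> unfolding spectral_constant_def by auto
      then show ?thesis using on0 onorm_trivial[OF triv, of "op_rat 1 1 A"] True by simp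
    next
      case False
      then show ?thesis using on0 sup_nonneg[OF bO False, of q p] pq \<open>\<kappa> > 0\<close> by simp
    qed
  next
    case False
    have "closure X \<subseteq> closure \<Omega>" using XO by (metis closure_closure closure_mono)
    then have "\<forall>z\<in>closure X. poly q z \<noteq> 0" using pq by blast
    then have "onorm (op_rat p q A) \<le> \<kappa> * (SUP z\<in>X. cmod (poly p z / poly q z))"
      using sc pq unfolding spectral_constant_def by blast
    also have "\<dots> \<le> \<kappa> * (SUP z\<in>\<Omega>. cmod (poly p z / poly q z))"
      using sup_closure_le[OF bO XO False, of q p] pq \<open>\<kappa> > 0\<close> by simp
    finally show ?thesis .
  qed
qed

lemma empty_smoothly_bounded: "smoothly_bounded {}"
  unfolding smoothly_bounded_def embedded_smooth_submanifold_def by simp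

lemma open_poly_nz: "open {z::complex. poly q z \<noteq> 0}"
proof -
  have "closed {z::complex. poly q z = 0}" by (intro closed_Collect_eq continuous_intros)
  then show ?thesis by (simp add: open_closed Collect_neg_eq)
qed

lemma nbhd_approx:
  fixes K :: "complex set"
  assumes K: "compact K" "K \<noteq> {}" "convex K" and W: "open W" "K \<subseteq> W"
  obtains V where "convex V" "open V" "bounded V" "K \<subseteq> V" "closure V \<subseteq> W"
proof -
  obtain e where e: "e > 0" "{x. infdist x K \<le> e} \<subseteq> W"
    using compact_in_open_separated[OF K(2,1) W] by blast
  define V where "V = {x. \<exists>k\<in>K. dist x k < e}"
  have "convex V"
    unfolding convex_alt V_def
  proof (intro ballI allI impI, safe)
    fix x y k1 k2 and u :: real
    assume k: "k1 \<in> K" "k2 \<in> K" "dist x k1 < e" "dist y k2 < e" and u: "0 \<le> u" "u \<le> 1"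
    let ?k = "(1 - u) *\<^sub>R k1 + u *\<^sub>R k2"
    have "?k \<in> K" using K(3) k u by (simp add: convex_alt)
    moreover have "dist ((1 - u) *\<^sub>R x + u *\<^sub>R y) ?k < e"
    proof -
      have "dist ((1 - u) *\<^sub>R x + u *\<^sub>R y) ?k = norm ((1 - u) *\<^sub>R (x - k1) + u *\<^sub>R (y - k2))"
        by (simp add: dist_norm algebra_simps)
      also have "\<dots> \<le> (1 - u) * norm (x - k1) + u * norm (y - k2)"
        using u by (metis (no_types) abs_of_nonneg diff_ge_0_iff_ge norm_scaleR norm_triangle_ineq)
      also have "\<dots> < (1 - u) * e + u * e"
      proof (cases "u = 0")
        case True then show ?thesis using k by (simp add: dist_norm)
      next
        case False
        then have "u * norm (y - k2) < u * e" using u k by (simp add: dist_norm)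
        moreover have "(1 - u) * norm (x - k1) \<le> (1 - u) * e"
          using u k by (intro mult_left_mono) (auto simp: dist_norm)
        ultimately show ?thesis by linarith
      qed
      finally show ?thesis by (simp add: algebra_simps)
    qed
    ultimately show "\<exists>k\<in>K. dist ((1 - u) *\<^sub>R x + u *\<^sub>R y) k < e" by blast
  qed
  moreover have "open V"
  proof -
    have "V = (\<Union>k\<in>K. ball k e)" by (auto simp: V_def dist_commute)
    then show ?thesis by auto
  qed
  moreover have "bounded V"
  proof -
    obtain B where B: "\<forall>k\<in>K. norm k \<le> B" using K(1) compact_imp_bounded bounded_iff by metis
    have "\<forall>x\<in>V. norm x \<le> B + e"
      unfolding V_def using B by (smt (verit) dist_norm mem_Collect_eq norm_triangle_sub)
    then show ?thesis by (auto simp: bounded_iff)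
  qed
  moreover have "K \<subseteq> V" using e by (force simp: V_def)
  moreover have "closure V \<subseteq> W"
  proof -
    have "closed {x. infdist x K \<le> e}" by (intro closed_Collect_le continuous_intros)
    moreover have "V \<subseteq> {x. infdist x K \<le> e}"
      unfolding V_def using infdist_le by (smt (verit) mem_Collect_eq subsetI)
    ultimately have "closure V \<subseteq> {x. infdist x K \<le> e}" by (rule closure_minimal[rotated])
    then show ?thesis using e by blast
  qed
  ultimately show ?thesis using that by blast
qed

lemma convex_iii_to_i:
  fixes A :: "'a::complex_inner \<Rightarrow> 'a"
  assumes bX: "bounded X" and cX: "convex X" and ne: "X \<noteq> {}" and sp: "op_spectrum A \<subseteq> closure X"
    and k: "\<kappa> > 0"
    and H: "\<forall>\<Omega>. convex \<Omega> \<and> smoothly_bounded \<Omega> \<and> op_spectrum A \<subseteq> \<Omega> \<and> X \<subseteq> closure \<Omega>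
                    \<longrightarrow> spectral_constant A \<Omega> \<kappa>"
  shows "spectral_constant A X \<kappa>"
  unfolding spectral_constant_def
proof (intro conjI allI impI)
  show "\<kappa> > 0" by fact
  fix p q assume pq: "q \<noteq> 0 \<and> (\<forall>z\<in>closure X. poly q z \<noteq> 0)"
  define h where "h = (\<lambda>z. cmod (poly p z / poly q z))"
  define S where "S = (SUP z\<in>X. h z)"
  define K where "K = closure X"
  have K: "compact K" "K \<noteq> {}" "convex K" using bX ne cX by (auto simp: K_def compact_closure convex_closure)
  have hS: "h z \<le> S" if "z \<in> K" for z
  proof -
    have a: "\<forall>z\<in>closure X. poly q z \<noteq> 0" using pq by blast
    have b: "\<forall>z\<in>X. cmod (poly p z / poly q z) \<le> S"
      unfolding S_def h_def using rat_bdd'[OF bX a, of p] by (auto intro: cSUP_upper)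
    show ?thesis using le_on_closure[OF bX a b] that unfolding K_def h_def by blast
  qed
  show "onorm (op_rat p q A) \<le> \<kappa> * (SUP z\<in>X. cmod (poly p z / poly q z))"
    unfolding h_def[symmetric] S_def[symmetric]
  proof (rule field_le_epsilon)
    fix e :: real assume e: "e > 0"
    define \<eta> where "\<eta> = e / \<kappa>"
    have \<eta>: "\<eta> > 0" using e k by (simp add: \<eta>_def)
    define W where "W = {z. poly q z \<noteq> 0} \<inter> h -` {..<S + \<eta>}"
    have oW: "open W"
    proof -
      have "continuous_on {z. poly q z \<noteq> 0} h" unfolding h_def by (rule rat_cont) auto
      then show ?thesis unfolding W_def by (rule continuous_open_preimage[OF _ open_poly_nz]) auto
    qed
    have KW: "K \<subseteq> W" using pq hS \<eta> by (force simp: W_def K_def)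
    obtain V where V: "convex V" "open V" "bounded V" "K \<subseteq> V" "closure V \<subseteq> W"
      using nbhd_approx[OF K oW KW] by blast
    obtain \<Omega> where \<Omega>: "convex \<Omega>" "smoothly_bounded \<Omega>" "K \<subseteq> \<Omega>" "closure \<Omega> \<subseteq> V"
      using convex_smooth_approx[OF K(1,2) V(1,2,3,4)] by blast
    have "op_spectrum A \<subseteq> \<Omega>" using sp \<Omega>(3) K_def by blast
    moreover have "X \<subseteq> closure \<Omega>" using \<Omega>(3) closure_subset K_def by blast
    ultimately have sc: "spectral_constant A \<Omega> \<kappa>" using H \<Omega>(1,2) by blast
    have clW: "closure \<Omega> \<subseteq> W" using \<Omega>(4) V(5) closure_subset by blast
    then have "\<forall>z\<in>closure \<Omega>. poly q z \<noteq> 0" by (auto simp: W_def)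
    then have "onorm (op_rat p q A) \<le> \<kappa> * (SUP z\<in>\<Omega>. h z)"
      using sc pq unfolding spectral_constant_def h_def by blast
    also have "\<dots> \<le> \<kappa> * (S + \<eta>)"
    proof -
      have "\<Omega> \<noteq> {}" using K(2) \<Omega>(3) by blast
      moreover have "\<forall>z\<in>\<Omega>. h z \<le> S + \<eta>" using clW closure_subset by (fastforce simp: W_def)
      ultimately have "(SUP z\<in>\<Omega>. h z) \<le> S + \<eta>" by (intro cSUP_least) auto
      then show ?thesis using k by simp
    qed
    also have "\<dots> = \<kappa> * S + e" using k by (simp add: \<eta>_def algebra_simps)
    finally show "onorm (op_rat p q A) \<le> \<kappa> * S + e" .
  qed
qed

lemma scaleC_zero_right [simp]: "a *\<^sub>C (0::'a::complex_inner) = 0"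
proof -
  have "a *\<^sub>C (0::'a) = a *\<^sub>C 0 + a *\<^sub>C 0" by (metis add_0 scaleC_add_right)
  then show ?thesis by simp
qed

lemma scaleC_zero_left [simp]: "0 *\<^sub>C (x::'a::complex_inner) = 0"
proof -
  have "0 *\<^sub>C x = 0 *\<^sub>C x + 0 *\<^sub>C x" by (metis add_0 scaleC_add_left)
  then show ?thesis by simp
qed

lemma scaleC_minus_left: "(- a) *\<^sub>C (x::'a::complex_inner) = - (a *\<^sub>C x)"
proof -
  have "a *\<^sub>C x + (- a) *\<^sub>C x = 0" by (metis scaleC_add_left add.right_inverse scaleC_zero_left)
  then show ?thesis by (simp add: eq_neg_iff_add_eq_0 add.commute)
qed

lemma scaleC_sum_right: "a *\<^sub>C (\<Sum>i\<in>I. f i) = (\<Sum>i\<in>I. a *\<^sub>C (f i :: 'a::complex_inner))"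
  by (induction I rule: infinite_finite_induct) (auto simp: scaleC_add_right)

lemma scaleC_sum_left: "(\<Sum>i\<in>I. f i) *\<^sub>C (x :: 'a::complex_inner) = (\<Sum>i\<in>I. f i *\<^sub>C x)"
  by (induction I rule: infinite_finite_induct) (auto simp: scaleC_add_left)

lemma scaleC_real: "complex_of_real r *\<^sub>C (x :: 'a::complex_inner) = r *\<^sub>R x"
  by (simp add: scaleR_scaleC)

lemma norm_scaleC: "norm (a *\<^sub>C (x::'a::complex_inner)) = cmod a * norm x"
proof -
  have "cinner (a *\<^sub>C x) (a *\<^sub>C x) = cnj a * cinner x (a *\<^sub>C x)" by (rule cinner_scaleC_left)
  also have "cinner x (a *\<^sub>C x) = cnj (cinner (a *\<^sub>C x) x)" by (rule cinner_commute)
  also have "cinner (a *\<^sub>C x) x = cnj a * cinner x x" by (rule cinner_scaleC_left)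
  finally have "complex_of_real ((norm (a *\<^sub>C x))\<^sup>2) = cnj a * a * complex_of_real ((norm x)\<^sup>2)"
    by (simp add: cinner_norm mult.assoc)
  also have "cnj a * a = complex_of_real ((cmod a)\<^sup>2)" by (metis complex_norm_square mult.commute)
  finally have "(norm (a *\<^sub>C x))\<^sup>2 = (cmod a * norm x)\<^sup>2"
    by (metis of_real_eq_iff of_real_mult power_mult_distrib)
  then show ?thesis by (simp add: power2_eq_iff_nonneg)
qed

lemma bounded_op_linear: "bounded_op A \<Longrightarrow> bounded_linear A"
  by (simp add: bounded_op_def)

lemma bounded_op_add: "bounded_op A \<Longrightarrow> A (x + y) = A x + A y"
  unfolding bounded_op_def using linear_add bounded_linear.linear by blast

lemma bounded_op_zero: "bounded_op A \<Longrightarrow> A 0 = 0"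
  unfolding bounded_op_def using linear_0 bounded_linear.linear by blast

lemma bounded_op_scaleC: "bounded_op A \<Longrightarrow> A (c *\<^sub>C x) = c *\<^sub>C A x"
  unfolding bounded_op_def by blast

lemma bounded_op_sum: "bounded_op A \<Longrightarrow> A (\<Sum>i\<in>I. f i) = (\<Sum>i\<in>I. A (f i))"
  by (induction I rule: infinite_finite_induct) (auto simp: bounded_op_add bounded_op_zero)

lemma bounded_op_ident: "bounded_op (\<lambda>x. x)"
  unfolding bounded_op_def by (simp add: bounded_linear_ident)

lemma bounded_op_zero_fun: "bounded_op (\<lambda>x. 0)"
  unfolding bounded_op_def by (simp add: bounded_linear_zero)

lemma bounded_op_scalar: "bounded_op (\<lambda>x::'a::complex_inner. c *\<^sub>C x)"
  unfolding bounded_op_def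
proof (intro conjI allI)
  show "bounded_linear (\<lambda>x::'a. c *\<^sub>C x)"
  proof (rule bounded_linear_intro[where K="cmod c"])
    fix x y :: 'a show "c *\<^sub>C (x + y) = c *\<^sub>C x + c *\<^sub>C y" by (rule scaleC_add_right)
    fix r :: real show "c *\<^sub>C (r *\<^sub>R x) = r *\<^sub>R (c *\<^sub>C x)"
      by (simp add: scaleR_scaleC scaleC_scaleC mult.commute)
    show "norm (c *\<^sub>C x) \<le> norm x * cmod c" by (simp add: norm_scaleC mult.commute)
  qed
  fix d and x :: 'a show "c *\<^sub>C (d *\<^sub>C x) = d *\<^sub>C (c *\<^sub>C x)" by (simp add: scaleC_scaleC mult.commute)
qed

lemma bounded_op_plus: "bounded_op F \<Longrightarrow> bounded_op G \<Longrightarrow> bounded_op (\<lambda>x. F x + G x)"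
  unfolding bounded_op_def by (auto intro: bounded_linear_add simp: scaleC_add_right)

lemma bounded_op_comp: "bounded_op F \<Longrightarrow> bounded_op G \<Longrightarrow> bounded_op (\<lambda>x. F (G x))"
  unfolding bounded_op_def using bounded_linear_compose[of F G] by (auto simp: o_def)

lemma op_poly_upto:
  assumes "degree p \<le> n"
  shows "op_poly p A x = (\<Sum>i\<le>n. coeff p i *\<^sub>C (A ^^ i) x)"
  unfolding op_poly_def
  by (rule sum.mono_neutral_left) (use assms in \<open>auto simp: coeff_eq_0\<close>)

lemma op_poly_add: "op_poly (p + r) A x = op_poly p A x + op_poly r A x"
proof -
  let ?n = "max (degree p) (degree r)"
  have "op_poly (p + r) A x = (\<Sum>i\<le>?n. coeff (p + r) i *\<^sub>C (A ^^ i) x)"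
    by (rule op_poly_upto) (simp add: degree_add_le)
  also have "\<dots> = (\<Sum>i\<le>?n. coeff p i *\<^sub>C (A ^^ i) x) + (\<Sum>i\<le>?n. coeff r i *\<^sub>C (A ^^ i) x)"
    by (simp add: scaleC_add_left sum.distrib)
  also have "\<dots> = op_poly p A x + op_poly r A x"
  proof -
    have "op_poly p A x = (\<Sum>i\<le>?n. coeff p i *\<^sub>C (A ^^ i) x)" by (rule op_poly_upto) simp
    moreover have "op_poly r A x = (\<Sum>i\<le>?n. coeff r i *\<^sub>C (A ^^ i) x)" by (rule op_poly_upto) simp
    ultimately show ?thesis by simp
  qed
  finally show ?thesis .
qed

lemma op_poly_smult: "op_poly (smult c p) A x = c *\<^sub>C op_poly p A x"
proof -
  have "op_poly (smult c p) A x = (\<Sum>i\<le>degree p. coeff (smult c p) i *\<^sub>C (A ^^ i) x)"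
    by (rule op_poly_upto) (simp add: degree_smult_le)
  also have "\<dots> = c *\<^sub>C op_poly p A x"
    by (simp add: op_poly_def scaleC_sum_right scaleC_scaleC)
  finally show ?thesis .
qed

lemma op_poly_zero [simp]: "op_poly 0 A x = 0"
  by (simp add: op_poly_def)

lemma op_poly_pCons:
  assumes A: "bounded_op A"
  shows "op_poly (pCons a p) A x = a *\<^sub>C x + A (op_poly p A x)"
proof -
  have "op_poly (pCons a p) A x = (\<Sum>i\<le>Suc (degree p). coeff (pCons a p) i *\<^sub>C (A ^^ i) x)"
    by (rule op_poly_upto) (simp add: degree_pCons_le)
  also have "\<dots> = coeff (pCons a p) 0 *\<^sub>C (A ^^ 0) x + (\<Sum>i\<le>degree p. coeff (pCons a p) (Suc i) *\<^sub>C (A ^^ Suc i) x)"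
    by (rule sum.atMost_Suc_shift)
  also have "\<dots> = a *\<^sub>C x + (\<Sum>i\<le>degree p. coeff p i *\<^sub>C (A ^^ Suc i) x)"
    by simp
  also have "(\<Sum>i\<le>degree p. coeff p i *\<^sub>C (A ^^ Suc i) x) = A (op_poly p A x)"
    by (simp add: op_poly_def bounded_op_sum[OF A] bounded_op_scaleC[OF A])
  finally show ?thesis .
qed

lemma op_poly_mult:
  assumes A: "bounded_op A"
  shows "op_poly (p * r) A x = op_poly p A (op_poly r A x)"
proof (induction p arbitrary: x rule: pCons_induct)
  case 0
  then show ?case by simp
next
  case (pCons a p)
  have "op_poly (pCons a p * r) A x = op_poly (smult a r + pCons 0 (p * r)) A x" by simp
  also have "\<dots> = a *\<^sub>C op_poly r A x + A (op_poly (p * r) A x)"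
    by (simp add: op_poly_add op_poly_smult op_poly_pCons[OF A])
  also have "\<dots> = op_poly (pCons a p) A (op_poly r A x)"
    by (simp add: op_poly_pCons[OF A] pCons.IH)
  finally show ?case .
qed

lemma op_poly_bounded:
  assumes A: "bounded_op A"
  shows "bounded_op (op_poly p A)"
proof (induction p rule: pCons_induct)
  case 0
  have "op_poly 0 A = (\<lambda>x. 0)" by (rule ext) simp
  then show ?case using bounded_op_zero_fun by simp
next
  case (pCons a p)
  have "op_poly (pCons a p) A = (\<lambda>x. a *\<^sub>C x + A (op_poly p A x))"
    by (rule ext) (simp add: op_poly_pCons[OF A])
  then show ?case
    using bounded_op_plus[OF bounded_op_scalar bounded_op_comp[OF A pCons.IH]] by simp
qed

lemma op_poly_const' : "op_poly [:c:] A x = c *\<^sub>C x"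
  by (simp add: op_poly_def)

lemma op_poly_linear:
  assumes A: "bounded_op A"
  shows "op_poly [:-a, 1:] A x = A x - a *\<^sub>C x"
  by (simp add: op_poly_pCons[OF A] op_poly_const' scaleC_minus_left scaleC_one bounded_op_zero[OF A])

lemma op_poly_invertible:
  fixes A :: "'a::complex_inner \<Rightarrow> 'a"
  assumes A: "bounded_op A" and q: "q \<noteq> 0" and roots: "\<forall>z. poly q z = 0 \<longrightarrow> z \<notin> op_spectrum A"
  shows "\<exists>B. bounded_op B \<and> (\<forall>x. B (op_poly q A x) = x) \<and> (\<forall>x. op_poly q A (B x) = x)"
  using q roots
proof (induction "degree q" arbitrary: q rule: less_induct)
  case less
  show ?case
  proof (cases "degree q = 0")
    case True
    then obtain c where c: "q = [:c:]" by (metis degree_eq_zeroE)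
    with less have "c \<noteq> 0" by simp
    show ?thesis
    proof (intro exI conjI allI)
      show "bounded_op (\<lambda>x. inverse c *\<^sub>C x)" by (rule bounded_op_scalar)
      fix x
      show "inverse c *\<^sub>C op_poly q A x = x"
        using \<open>c \<noteq> 0\<close> by (simp add: c op_poly_const' scaleC_scaleC scaleC_one)
      show "op_poly q A (inverse c *\<^sub>C x) = x"
        using \<open>c \<noteq> 0\<close> by (simp add: c op_poly_const' scaleC_scaleC scaleC_one)
    qed
  next
    case False
    then have "\<not> constant (poly q)" by (simp add: constant_degree)
    then obtain a where a: "poly q a = 0" using fundamental_theorem_of_algebra by blast
    then obtain q' where q': "q = [:-a, 1:] * q'" using poly_eq_0_iff_dvd by (metis dvdE)
    have q'0: "q' \<noteq> 0" using less.prems q' by auto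
    have "degree ([:-a,1:] * q') = degree [:-a,1:] + degree q'" by (rule degree_mult_eq) (use q'0 in auto)
    then have dq: "degree q = Suc (degree q')" by (simp only: q') simp
    have "\<forall>z. poly q' z = 0 \<longrightarrow> z \<notin> op_spectrum A" using less.prems(2) q' by simp
    then obtain B' where B': "bounded_op B'" "\<forall>x. B' (op_poly q' A x) = x" "\<forall>x. op_poly q' A (B' x) = x"
      using less.hyps[of q'] dq q'0 by auto
    have "a \<notin> op_spectrum A" using a less.prems(2) by blast
    then obtain Ba where Ba: "bounded_op Ba" "\<forall>x. Ba (A x - a *\<^sub>C x) = x" "\<forall>x. A (Ba x) - a *\<^sub>C Ba x = x"
      unfolding op_spectrum_def by blast
    have qA: "op_poly q A x = A (op_poly q' A x) - a *\<^sub>C op_poly q' A x" for x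
      unfolding q' op_poly_mult[OF A] op_poly_linear[OF A] ..
    show ?thesis
    proof (intro exI conjI allI)
      show "bounded_op (\<lambda>x. B' (Ba x))" by (rule bounded_op_comp[OF B'(1) Ba(1)])
      fix x
      show "B' (Ba (op_poly q A x)) = x" by (simp add: qA Ba(2) B'(2))
      show "op_poly q A (B' (Ba x)) = x" by (simp add: qA B'(3) Ba(3))
    qed
  qed
qed

lemma op_rat_bounded:
  fixes A :: "'a::complex_inner \<Rightarrow> 'a"
  assumes A: "bounded_op A" and q: "q \<noteq> 0" and roots: "\<forall>z. poly q z = 0 \<longrightarrow> z \<notin> op_spectrum A"
  shows "bounded_op (op_rat p q A)"
proof -
  obtain B where B: "bounded_op B" "\<forall>x. B (op_poly q A x) = x" "\<forall>x. op_poly q A (B x) = x"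
    using op_poly_invertible[OF assms] by blast
  have "inv (op_poly q A) = B" by (rule inv_equality) (use B in auto)
  then have "op_rat p q A = (\<lambda>x. op_poly p A (B x))" unfolding op_rat_def by (simp add: o_def)
  then show ?thesis using bounded_op_comp[OF op_poly_bounded[OF A] B(1)] by simp
qed

lemma op_rat_add: "op_rat (p + r) q A x = op_rat p q A x + op_rat r q A x"
  by (simp add: op_rat_def op_poly_add)

lemma op_rat_smult: "op_rat (smult c p) q A x = c *\<^sub>C op_rat p q A x"
  by (simp add: op_rat_def op_poly_smult)

lemma poly_growth:
  fixes P Q :: "complex poly"
  assumes deg: "degree Q < degree P"
  shows "\<exists>R. \<forall>z. R \<le> cmod z \<longrightarrow> M * cmod (poly Q z) < cmod (poly P z)"
proof -
  have lim: "((\<lambda>x. poly Q x / poly P x) \<longlongrightarrow> 0) at_infinity"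
    by (rule poly_divide_tendsto_0_at_infinity[OF deg])
  have "\<forall>\<^sub>F x in at_infinity. cmod (poly Q x / poly P x) < 1 / (\<bar>M\<bar> + 1)"
    using lim[unfolded tendsto_iff, rule_format, of "1 / (\<bar>M\<bar> + 1)"] by (simp add: dist_norm)
  moreover have "\<forall>\<^sub>F x in at_infinity. poly P x \<noteq> 0"
    using filterlim_poly_at_infinity[of P] deg filterlim_at_infinity_imp_eventually_ne by auto
  ultimately have "\<forall>\<^sub>F x in at_infinity. M * cmod (poly Q x) < cmod (poly P x)"
  proof eventually_elim
    case (elim x)
    define m where "m = \<bar>M\<bar> + 1"
    have m: "m > 0" by (simp add: m_def)
    have Pp: "cmod (poly P x) > 0" using elim by simp
    have "cmod (poly Q x) / cmod (poly P x) < 1 / m" using elim by (simp add: norm_divide m_def)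
    then have "cmod (poly Q x) * (\<bar>M\<bar> + 1) < cmod (poly P x)"
      using m Pp unfolding m_def[symmetric] by (simp add: field_simps)
    moreover have "M * cmod (poly Q x) \<le> cmod (poly Q x) * (\<bar>M\<bar> + 1)"
      by (smt (verit) abs_ge_self mult.commute mult_right_mono norm_ge_zero)
    ultimately show ?case by linarith
  qed
  then show ?thesis unfolding eventually_at_infinity by blast
qed

lemma rat_deriv:
  fixes P Q :: "complex poly"
  assumes "poly Q z \<noteq> 0"
  shows "((\<lambda>z. poly P z / poly Q z) has_field_derivative
           poly (pderiv P * Q - P * pderiv Q) z / (poly Q z)\<^sup>2) (at z)"
proof -
  have "((\<lambda>z. poly P z / poly Q z) has_field_derivative
         (poly (pderiv P) z * poly Q z - poly P z * poly (pderiv Q) z) / (poly Q z * poly Q z)) (at z)"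
    using DERIV_divide[OF poly_DERIV[of P z] poly_DERIV[of Q z] assms] by simp
  then show ?thesis by (simp add: power2_eq_square)
qed

lemma finite_avoid:
  fixes S :: "real set"
  assumes "finite S" "a < b"
  shows "\<exists>M. a < M \<and> M < b \<and> M \<notin> S"
proof -
  have "\<not> finite {a<..<b}" using assms(2) by simp
  then have "{a<..<b} - S \<noteq> {}" using assms(1) by (metis Diff_eq_empty_iff finite_subset)
  then show ?thesis by auto
qed

lemma lemniscate:
  fixes P Q :: "complex poly"
  assumes nc: "\<forall>z. poly Q z = 0 \<longrightarrow> poly P z \<noteq> 0" and Q0: "Q \<noteq> 0"
    and deg: "degree Q < degree P" and ab: "0 \<le> a" "a < b"
  shows "\<exists>M. a < M \<and> M < b \<and> smoothly_bounded {z. cmod (poly P z) < M * cmod (poly Q z)}"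
proof -
  define F where "F = (\<lambda>z. poly P z / poly Q z)"
  define Z where "Z = {z. poly Q z \<noteq> 0}"
  define D where "D = pderiv P * Q - P * pderiv Q"
  have oZ: "open Z" unfolding Z_def by (rule open_poly_nz)
  have fin_roots: "finite {z. poly Q z = 0}" using Q0 poly_roots_finite by blast
  have Zeq: "Z = UNIV - {z. poly Q z = 0}" by (auto simp: Z_def)
  have cZ: "connected Z" unfolding Zeq
    by (rule connected_open_delete_finite[OF open_UNIV connected_UNIV _ fin_roots]) simp
  have dF: "(F has_field_derivative poly D z / (poly Q z)\<^sup>2) (at z)" if "z \<in> Z" for z
    using rat_deriv[of Q z P] that unfolding F_def D_def Z_def by simp
  have hF: "F holomorphic_on Z" using dF oZ holomorphic_on_open by blast
  have contF: "continuous_on Z F" using hF holomorphic_on_imp_continuous_on by blast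
  have derivF: "deriv F z = poly D z / (poly Q z)\<^sup>2" if "z \<in> Z" for z
    using dF[OF that] DERIV_imp_deriv by blast
  have D0: "D \<noteq> 0"
  proof
    assume "D = 0"
    then have "\<forall>x\<in>Z - {}. (F has_field_derivative 0) (at x)" using dF by fastforce
    then obtain c where c: "\<forall>z\<in>Z. F z = c"
      using DERIV_zero_connected_constant[OF cZ oZ finite.emptyI contF] by blast
    obtain R where R: "\<forall>z. R \<le> cmod z \<longrightarrow> (cmod c + 1) * cmod (poly Q z) < cmod (poly P z)"
      using poly_growth[OF deg] by blast
    obtain B where B: "\<forall>z\<in>{z. poly Q z = 0}. cmod z \<le> B"
      using finite_imp_bounded[OF fin_roots] bounded_iff by blast
    define z where "z = complex_of_real (max R (B + 1))"
    have nz: "cmod z \<ge> R" "cmod z \<ge> B + 1" by (auto simp: z_def)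
    then have zZ: "z \<in> Z" using B unfolding Z_def by force
    have "(cmod c + 1) * cmod (poly Q z) < cmod (poly P z)" using R nz by blast
    moreover have "poly P z = c * poly Q z" using c zZ unfolding F_def Z_def by (auto simp: field_simps)
    ultimately have "(cmod c + 1) * cmod (poly Q z) < cmod c * cmod (poly Q z)" by (simp add: norm_mult)
    moreover have "cmod (poly Q z) > 0" using zZ by (simp add: Z_def)
    ultimately show False by (smt (verit) mult_right_mono norm_ge_zero)
  qed
  define Crit where "Crit = {z\<in>Z. deriv F z = 0}"
  have "Crit \<subseteq> {z. poly D z = 0}" using derivF by (auto simp: Crit_def Z_def)
  then have finC: "finite Crit" using poly_roots_finite[OF D0] finite_subset by blast
  obtain M where M: "a < M" "M < b" "M \<notin> (\<lambda>z. cmod (F z)) ` Crit"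
    using finite_avoid[OF finite_imageI[OF finC] ab(2)] by blast
  have M0: "M > 0" using M ab by linarith
  define \<Omega> where "\<Omega> = {z. cmod (poly P z) < M * cmod (poly Q z)}"
  have oO: "open \<Omega>" unfolding \<Omega>_def by (intro open_Collect_less continuous_intros)
  have bO: "bounded \<Omega>"
  proof -
    obtain R where R: "\<forall>z. R \<le> cmod z \<longrightarrow> M * cmod (poly Q z) < cmod (poly P z)"
      using poly_growth[OF deg] by blast
    have "\<Omega> \<subseteq> cball 0 R"
    proof
      fix z assume "z \<in> \<Omega>"
      then have "\<not> (M * cmod (poly Q z) < cmod (poly P z))" by (simp add: \<Omega>_def)
      then have "cmod z < R" using R by (meson not_le)
      then show "z \<in> cball 0 R" by simp
    qed
    then show ?thesis using bounded_cball bounded_subset by blast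
  qed
  have clO: "closure \<Omega> \<subseteq> {z. cmod (poly P z) \<le> M * cmod (poly Q z)}"
    by (rule closure_minimal) (auto simp: \<Omega>_def intro!: closed_Collect_le continuous_intros)
  have fr1: "poly Q z \<noteq> 0 \<and> cmod (F z) = M" if "z \<in> frontier \<Omega>" for z
  proof -
    have "z \<in> closure \<Omega>" "z \<notin> \<Omega>" using that oO by (auto simp: frontier_def interior_open)
    then have eq: "cmod (poly P z) = M * cmod (poly Q z)" using clO by (force simp: \<Omega>_def)
    then have "poly Q z \<noteq> 0" using nc by force
    then show ?thesis using eq by (simp add: F_def norm_divide)
  qed
  have ndF: "deriv F z \<noteq> 0" if "z \<in> Z" "cmod (F z) = M" for z
    using M(3) that by (auto simp: Crit_def)
  have fr2: "z \<in> frontier \<Omega>" if zZ: "z \<in> Z" and Fz: "cmod (F z) = M" for z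
  proof -
    have zn: "z \<notin> \<Omega>" using zZ Fz by (simp add: \<Omega>_def F_def Z_def norm_divide field_simps)
    obtain r where r: "r > 0" "ball z r \<subseteq> Z" "inj_on F (ball z r)"
      using has_complex_derivative_locally_injective[OF hF zZ oZ ndF[OF zZ Fz]] by blast
    have "z \<in> closure \<Omega>"
      unfolding closure_approachable
    proof (intro allI impI)
      fix e :: real assume e: "e > 0"
      define U' where "U' = ball z (min r e)"
      have U'Z: "U' \<subseteq> ball z r" by (auto simp: U'_def)
      have "open (F ` U')"
        using open_mapping_thm3[of F U'] hF r U'Z holomorphic_on_subset inj_on_subset
        by (metis U'_def open_ball order_trans)
      moreover have "F z \<in> F ` U'" using r e by (auto simp: U'_def)
      ultimately obtain d where d: "d > 0" "ball (F z) d \<subseteq> F ` U'" using openE by blast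
      define t where "t = min (1/2) (d / (2 * M))"
      have t: "0 < t" "t < 1" "t * M < d" using d M0
        by (auto simp: t_def min_def field_simps)
      define w where "w = (1 - t) * F z"
      have "dist w (F z) = t * M" using Fz t by (simp add: w_def dist_norm algebra_simps norm_mult)
      then have "w \<in> F ` U'" using d t by (auto simp: dist_commute)
      then obtain y where y: "y \<in> U'" "F y = w" by blast
      have yZ: "y \<in> Z" using y U'Z r by auto
      have n1: "cmod (1 - complex_of_real t) = 1 - t"
      proof -
        have "1 - complex_of_real t = complex_of_real (1 - t)" by simp
        then show ?thesis using t by (metis abs_of_pos diff_gt_0_iff_gt norm_of_real)
      qed
      have "cmod (F y) = (1 - t) * M" using y t Fz n1 by (simp add: w_def norm_mult)
      then have "cmod (F y) < M" using t M0 by (smt (verit) mult_le_cancel_right1)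
      then have "y \<in> \<Omega>" using yZ by (simp add: \<Omega>_def F_def Z_def norm_divide field_simps)
      moreover have "dist y z < e" using y by (auto simp: U'_def dist_commute)
      ultimately show "\<exists>y\<in>\<Omega>. dist y z < e" by blast
    qed
    then show ?thesis using zn oO by (simp add: frontier_def interior_open)
  qed
  have man: "embedded_smooth_submanifold (frontier \<Omega>)"
    unfolding embedded_smooth_submanifold_def
  proof
    fix p assume p: "p \<in> frontier \<Omega>"
    then have pZ: "p \<in> Z" and Fp: "cmod (F p) = M" using fr1 by (auto simp: Z_def)
    obtain r where r: "r > 0" "ball p r \<subseteq> Z" "inj_on F (ball p r)"
      using has_complex_derivative_locally_injective[OF hF pZ oZ ndF[OF pZ Fp]] by blast
    have "continuous (at p) F" using contF pZ oZ continuous_on_eq_continuous_at by blast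
    then obtain r2 where r2: "r2 > 0" "\<forall>y. dist y p < r2 \<longrightarrow> dist (F y) (F p) < M / 2"
      unfolding continuous_at_eps_delta using M0 by (metis half_gt_zero)
    define U where "U = ball p (min r r2)"
    have UZ: "U \<subseteq> ball p r" by (auto simp: U_def)
    have Fp0: "F p \<noteq> 0" using Fp M0 by auto
    show "\<exists>U \<phi> L. open U \<and> p \<in> U \<and> inj_on \<phi> U \<and> open (\<phi> ` U) \<and>
        smooth_on U \<phi> \<and> smooth_on (\<phi> ` U) (the_inv_into U \<phi>) \<and>
        subspace L \<and> \<phi> ` (U \<inter> frontier \<Omega>) = \<phi> ` U \<inter> L"
    proof (rule chart_lemma[where k=F, OF _ _ _ _ Fp0])
      show "open U" by (simp add: U_def)
      show "p \<in> U" using r r2 by (simp add: U_def)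
      show "F holomorphic_on U" using hF UZ r holomorphic_on_subset by blast
      show "inj_on F U" using r UZ inj_on_subset by blast
      show "\<forall>z\<in>U. F z / F p \<in> ball 1 1"
      proof
        fix z assume "z \<in> U"
        then have "dist z p < r2" by (simp add: U_def dist_commute)
        then have "cmod (F z - F p) < M / 2" using r2 by (simp add: dist_norm)
        then have "cmod (F z / F p - 1) < 1/2" using Fp Fp0 M0
          by (simp add: norm_divide divide_simps diff_divide_distrib[symmetric])
        then show "F z / F p \<in> ball 1 1" by (simp add: dist_norm norm_minus_commute)
      qed
      show "\<forall>z\<in>U. (z \<in> frontier \<Omega>) = (cmod (F z) = cmod (F p))"
        using fr1 fr2 Fp UZ r by (auto simp: Z_def)
    qed
  qed
  have "smoothly_bounded \<Omega>" unfolding smoothly_bounded_def using oO bO man by blast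
  then show ?thesis using M unfolding \<Omega>_def by blast
qed

lemma onorm_le':
  assumes "\<And>x. norm (f x) \<le> b * norm x" "0 \<le> b"
  shows "onorm f \<le> b"
  unfolding onorm_def
proof (rule cSUP_least)
  show "UNIV \<noteq> {}" by simp
  fix x
  show "norm (f x) / norm x \<le> b"
  proof (cases "x = 0")
    case True then show ?thesis using assms(2) by simp
  next
    case False then show ?thesis using assms(1)[of x] by (simp add: divide_le_eq)
  qed
qed

lemma general_ii_to_i:
  fixes A :: "'a::complex_inner \<Rightarrow> 'a"
  assumes A: "bounded_op A" and bX: "bounded X" and ne: "X \<noteq> {}" and sp: "op_spectrum A \<subseteq> closure X"
    and k: "\<kappa> > 0"
    and H: "\<forall>\<Omega>. smoothly_bounded \<Omega> \<and> op_spectrum A \<subseteq> \<Omega> \<and> X \<subseteq> closure \<Omega>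
                    \<longrightarrow> spectral_constant A \<Omega> \<kappa>"
  shows "spectral_constant A X \<kappa>"
  unfolding spectral_constant_def
proof (intro conjI allI impI)
  show "\<kappa> > 0" by fact
  fix p q assume pq: "q \<noteq> 0 \<and> (\<forall>z\<in>closure X. poly q z \<noteq> 0)"
  define h where "h = (\<lambda>z. cmod (poly p z / poly q z))"
  define S where "S = (SUP z\<in>X. h z)"
  define K where "K = closure X"
  have K: "compact K" "K \<noteq> {}" using bX ne by (auto simp: K_def compact_closure)
  have qK: "\<forall>z\<in>closure X. poly q z \<noteq> 0" using pq by blast
  have hS: "h z \<le> S" if "z \<in> K" for z
  proof -
    have b: "\<forall>z\<in>X. cmod (poly p z / poly q z) \<le> S"
      unfolding S_def h_def using rat_bdd'[OF bX qK, of p] by (auto intro: cSUP_upper)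
    show ?thesis using le_on_closure[OF bX qK b] that unfolding K_def h_def by blast
  qed
  have S0: "0 \<le> S" unfolding S_def h_def using sup_nonneg[OF bX ne qK] .
  have roots: "\<forall>z. poly q z = 0 \<longrightarrow> z \<notin> op_spectrum A" using sp qK by blast
  have q0: "q \<noteq> 0" using pq by blast
  have finq: "finite {z. poly q z = 0}" using poly_roots_finite[OF q0] .
  obtain c where c: "poly q c \<noteq> 0"
    using ex_new_if_finite[OF infinite_UNIV_char_0 finq] by blast
  define N where "N = degree p + degree q + 1"
  define r where "r = [:-c, 1:] ^ N"
  have degr: "degree r = N" unfolding r_def by (rule degree_linear_power)
  have rnz: "poly r z \<noteq> 0" if "poly q z = 0" for z
    using that c by (auto simp: r_def)
  define T where "T = op_rat r q A"
  define G where "G = op_rat p q A"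
  have blT: "bounded_linear T" unfolding T_def using op_rat_bounded[OF A q0 roots] bounded_op_linear by blast
  have blG: "bounded_linear G" unfolding G_def using op_rat_bounded[OF A q0 roots] bounded_op_linear by blast
  have "continuous_on K (\<lambda>z. poly r z / poly q z)"
    using qK unfolding K_def by (intro continuous_intros) auto
  then have "compact ((\<lambda>z. poly r z / poly q z) ` K)"
    using K(1) compact_continuous_image by blast
  then have "bounded ((\<lambda>z. poly r z / poly q z) ` K)" by (rule compact_imp_bounded)
  then obtain C1 where C1': "\<forall>y\<in>(\<lambda>z. poly r z / poly q z) ` K. norm y \<le> C1"
    unfolding bounded_iff by blast
  have C1: "\<forall>z\<in>K. cmod (poly r z / poly q z) \<le> C1" using C1' by simp
  show "onorm (op_rat p q A) \<le> \<kappa> * (SUP z\<in>X. cmod (poly p z / poly q z))"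
    unfolding h_def[symmetric] S_def[symmetric] G_def[symmetric]
  proof (rule field_le_epsilon)
    fix e :: real assume e: "e > 0"
    define L where "L = \<kappa> * \<bar>C1\<bar> + \<kappa> + onorm T + 1"
    have oT: "0 \<le> onorm T" using onorm_pos_le[OF blT] .
    have "0 \<le> \<kappa> * \<bar>C1\<bar>" using k by simp
    then have L: "L > 0" using k oT unfolding L_def by linarith
    define Bad where "Bad = (\<lambda>z. - poly p z / poly r z) ` {z. poly q z = 0}"
    have "finite Bad" unfolding Bad_def using finq by simp
    then have "finite {t::real. complex_of_real t \<in> Bad}"
      by (rule finite_vimageI[unfolded vimage_def]) (simp add: inj_on_def)
    then obtain \<delta> where \<delta>: "0 < \<delta>" "\<delta> < e / L" "complex_of_real \<delta> \<notin> Bad"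
      using finite_avoid[of "{t::real. complex_of_real t \<in> Bad}" 0 "e / L"] e L by auto
    define P where "P = p + smult (complex_of_real \<delta>) r"
    have nc: "\<forall>z. poly q z = 0 \<longrightarrow> poly P z \<noteq> 0"
    proof (intro allI impI)
      fix z assume z: "poly q z = 0"
      show "poly P z \<noteq> 0"
      proof
        assume "poly P z = 0"
        then have "poly p z + complex_of_real \<delta> * poly r z = 0" by (simp add: P_def)
        then have "complex_of_real \<delta> * poly r z = - poly p z" by (simp add: eq_neg_iff_add_eq_0 add.commute)
        then have "complex_of_real \<delta> = - poly p z / poly r z"
          using rnz[OF z] by (metis minus_divide_left nonzero_mult_div_cancel_right)
        then show False using \<delta>(3) z by (auto simp: Bad_def)
      qed
    qed
    have degP: "degree P = N"
    proof -
      have "degree (smult (complex_of_real \<delta>) r) = N" using \<delta>(1) degr by simp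
      moreover have "degree p < N" by (simp add: N_def)
      ultimately show ?thesis unfolding P_def by (metis degree_add_eq_right)
    qed
    have degq: "degree q < degree P" using degP by (simp add: N_def)
    have a0: "0 \<le> S + \<delta> * \<bar>C1\<bar>" using S0 \<delta>(1) by simp
    obtain M where M: "S + \<delta> * \<bar>C1\<bar> < M" "M < S + \<delta> * \<bar>C1\<bar> + \<delta>"
      and sbO: "smoothly_bounded {z. cmod (poly P z) < M * cmod (poly q z)}"
      using lemniscate[OF nc q0 degq a0, of "S + \<delta> * \<bar>C1\<bar> + \<delta>"] \<delta>(1) by auto
    define \<Omega> where "\<Omega> = {z. cmod (poly P z) < M * cmod (poly q z)}"
    have KO: "K \<subseteq> \<Omega>"
    proof
      fix z assume z: "z \<in> K"
      have qz: "poly q z \<noteq> 0" using z qK K_def by blast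
      have "poly P z / poly q z = poly p z / poly q z + complex_of_real \<delta> * (poly r z / poly q z)"
        by (simp add: P_def add_divide_distrib)
      then have "cmod (poly P z / poly q z) \<le> cmod (poly p z / poly q z) + cmod (complex_of_real \<delta> * (poly r z / poly q z))"
        by (metis norm_triangle_ineq)
      also have "cmod (complex_of_real \<delta> * (poly r z / poly q z)) = \<delta> * cmod (poly r z / poly q z)"
        using \<delta>(1) by (simp only: norm_mult norm_of_real abs_of_pos)
      finally have "cmod (poly P z / poly q z) \<le> h z + \<delta> * cmod (poly r z / poly q z)"
        by (simp add: h_def)
      also have "\<dots> \<le> S + \<delta> * \<bar>C1\<bar>"
        using hS[OF z] C1 z \<delta>(1) by (smt (verit) abs_ge_self mult_left_mono)
      also have "\<dots> < M" by (rule M(1))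
      finally show "z \<in> \<Omega>" using qz by (simp add: \<Omega>_def norm_divide divide_less_eq)
    qed
    have "op_spectrum A \<subseteq> \<Omega>" using sp KO K_def by blast
    moreover have "X \<subseteq> closure \<Omega>" using KO closure_subset K_def by blast
    ultimately have sc: "spectral_constant A \<Omega> \<kappa>" using H sbO \<Omega>_def by blast
    have clO: "closure \<Omega> \<subseteq> {z. cmod (poly P z) \<le> M * cmod (poly q z)}"
      by (rule closure_minimal) (auto simp: \<Omega>_def intro!: closed_Collect_le continuous_intros)
    have qclO: "\<forall>z\<in>closure \<Omega>. poly q z \<noteq> 0"
      using clO nc by fastforce
    have "onorm (op_rat P q A) \<le> \<kappa> * (SUP z\<in>\<Omega>. cmod (poly P z / poly q z))"
      using sc q0 qclO unfolding spectral_constant_def by blast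
    also have "\<dots> \<le> \<kappa> * M"
    proof -
      have "\<Omega> \<noteq> {}" using K(2) KO by blast
      moreover have "\<forall>z\<in>\<Omega>. cmod (poly P z / poly q z) \<le> M"
      proof
        fix z assume "z \<in> \<Omega>"
        then have z: "cmod (poly P z) < M * cmod (poly q z)" by (simp add: \<Omega>_def)
        then have "poly q z \<noteq> 0" by auto
        then show "cmod (poly P z / poly q z) \<le> M" using z by (simp add: norm_divide divide_le_eq)
      qed
      ultimately have "(SUP z\<in>\<Omega>. cmod (poly P z / poly q z)) \<le> M" by (intro cSUP_least) auto
      then show ?thesis using k by simp
    qed
    finally have onP: "onorm (op_rat P q A) \<le> \<kappa> * M" .
    have blP: "bounded_linear (op_rat P q A)" using op_rat_bounded[OF A q0 roots] bounded_op_linear by blast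
    have decomp: "op_rat P q A x = G x + \<delta> *\<^sub>R T x" for x
      by (simp add: P_def G_def T_def op_rat_add op_rat_smult scaleC_real)
    have "onorm G \<le> onorm (op_rat P q A) + \<delta> * onorm T"
    proof (rule onorm_le')
      fix x
      have "norm (G x) = norm (op_rat P q A x - \<delta> *\<^sub>R T x)" by (simp add: decomp)
      also have "\<dots> \<le> norm (op_rat P q A x) + \<delta> * norm (T x)"
        using \<delta>(1) norm_triangle_ineq4[of "op_rat P q A x" "\<delta> *\<^sub>R T x"] by simp
      also have "\<dots> \<le> onorm (op_rat P q A) * norm x + \<delta> * (onorm T * norm x)"
        using add_mono[OF onorm[OF blP, of x] mult_left_mono[OF onorm[OF blT, of x], of \<delta>]] \<delta>(1) by simp
      finally show "norm (G x) \<le> (onorm (op_rat P q A) + \<delta> * onorm T) * norm x"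
        by (simp add: algebra_simps)
      show "0 \<le> onorm (op_rat P q A) + \<delta> * onorm T"
        using onorm_pos_le[OF blP] oT \<delta>(1) by simp
    qed
    also have "\<dots> \<le> \<kappa> * M + \<delta> * onorm T" using onP by simp
    also have "\<dots> \<le> \<kappa> * (S + \<delta> * \<bar>C1\<bar> + \<delta>) + \<delta> * onorm T"
      using M(2) k by simp
    also have "\<dots> = \<kappa> * S + \<delta> * (L - 1)" by (simp add: L_def algebra_simps)
    also have "\<dots> \<le> \<kappa> * S + \<delta> * L" using \<delta>(1) by simp
    also have "\<delta> * L \<le> e" using \<delta>(2) L by (simp add: field_simps)
    finally show "onorm G \<le> \<kappa> * S + e" by simp
  qed
qed

theorem propositionA2:
  fixes A :: "'a::chilbert_space \<Rightarrow> 'a" and X :: "complex set" and \<kappa> :: real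
  assumes "bounded_op A"
    and "bounded X"
    and "op_spectrum A \<subseteq> closure X"
    and "\<kappa> > 0"
  shows "(spectral_constant A X \<kappa> \<longleftrightarrow>
            (\<forall>\<Omega>. smoothly_bounded \<Omega> \<and> op_spectrum A \<subseteq> \<Omega> \<and> X \<subseteq> closure \<Omega>
                  \<longrightarrow> spectral_constant A \<Omega> \<kappa>))
       \<and> (convex X \<longrightarrow>
            (spectral_constant A X \<kappa> \<longleftrightarrow>
              (\<forall>\<Omega>. convex \<Omega> \<and> smoothly_bounded \<Omega> \<and> op_spectrum A \<subseteq> \<Omega> \<and> X \<subseteq> closure \<Omega>
                    \<longrightarrow> spectral_constant A \<Omega> \<kappa>)))"
proof (intro conjI impI iffI allI)
  fix \<Omega> assume sc: "spectral_constant A X \<kappa>"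
    and H: "smoothly_bounded \<Omega> \<and> op_spectrum A \<subseteq> \<Omega> \<and> X \<subseteq> closure \<Omega>"
  then show "spectral_constant A \<Omega> \<kappa>"
    using i_to_ii[OF sc] by (auto simp: smoothly_bounded_def)
next
  assume H: "\<forall>\<Omega>. smoothly_bounded \<Omega> \<and> op_spectrum A \<subseteq> \<Omega> \<and> X \<subseteq> closure \<Omega>
                  \<longrightarrow> spectral_constant A \<Omega> \<kappa>"
  show "spectral_constant A X \<kappa>"
  proof (cases "X = {}")
    case True
    then have "op_spectrum A \<subseteq> {}" using assms(3) by simp
    then show ?thesis using H[rule_format, of "{}"] True empty_smoothly_bounded by simp
  next
    case False
    then show ?thesis using general_ii_to_i[OF assms(1,2) False assms(3,4) H] by blast
  qed
next
  fix \<Omega> assume sc: "spectral_constant A X \<kappa>"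
    and H: "convex \<Omega> \<and> smoothly_bounded \<Omega> \<and> op_spectrum A \<subseteq> \<Omega> \<and> X \<subseteq> closure \<Omega>"
  then show "spectral_constant A \<Omega> \<kappa>"
    using i_to_ii[OF sc] by (auto simp: smoothly_bounded_def)
next
  assume cX: "convex X"
    and H: "\<forall>\<Omega>. convex \<Omega> \<and> smoothly_bounded \<Omega> \<and> op_spectrum A \<subseteq> \<Omega> \<and> X \<subseteq> closure \<Omega>
                    \<longrightarrow> spectral_constant A \<Omega> \<kappa>"
  show "spectral_constant A X \<kappa>"
  proof (cases "X = {}")
    case True
    then have "op_spectrum A \<subseteq> {}" using assms(3) by simp
    then show ?thesis using H[rule_format, of "{}"] True empty_smoothly_bounded by simp
  next
    case False
    then show ?thesis using convex_iii_to_i[OF assms(2) cX False assms(3,4) H] by blast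
  qed
qed

end
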